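(* Let $p\in(0,\infty]$, $\lambda\in F'$, and let $K$ be a compact convex subset of $F'$ such that $\mathcal B^p_K(\mathcal N)\ne\{0\}$. Then multiplication by the function $(\zeta,z)\mapsto e^{i\langle\lambda_{\mathbb C},z\rangle}$ induces a continuous linear mapping $\mathcal B^p_K(\mathcal N)\to\mathcal B^p_{K+\lambda}(\mathcal N)$ if and only if $\lambda\in\Phi(E)^\circ$.
   Context: Let $E$ be a complex Hilbert space, $F$ a real Hilbert space, $F'$ its dual, $F_{\mathbb C}$ its complexification, and $\Phi\colon E\times E\to F_{\mathbb C}$ a hermitian map (complex-linear in the first variable, conjugate-linear in the second); $\Phi(\zeta)=\Phi(\zeta,\zeta)\in F$. For $\lambda\in F'$, $\lambda_{\mathbb C}$ is its complex-linear extension to $F_{\mathbb C}$. $\mathcal N=E\times F$ with group law $(\zeta,x)(\zeta',x')=(\zeta+\zeta',x+x'+2\operatorname{Im}\Phi(\zeta,\zeta'))$ and Lebesgue measure. $\rho(\zeta,z)=\operatorname{Im}z-\Phi(\zeta)$; $f_0(\zeta,x)=f(\zeta,x+i\Phi(\zeta))$. For compact convex $K\subseteq F'$, $H_K(h)=\sup_{\lambda\in-K}\langle\lambda,h\rangle$. $\widetilde{\mathcal E}_K$: entire $f$ on $E\times F_{\mathbb C}$ such that for all $\varepsilon>0$ there is $C_\varepsilon$ with $|f(\zeta,z)|\le C_\varepsilon\exp(C_\varepsilon(|\zeta|^2+|\operatorname{Re}z|)+H_{K+\overline B_{F'}(0,\varepsilon)}(\rho(\zeta,z)))$. $\mathcal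 B^p_K(\mathcal N)=\{f\in\widetilde{\mathcal E}_K:f_0\in L^p(\mathcal N)\}$, $\|f\|=\|f_0\|_{L^p(\mathcal N)}$. $\Phi(E)^\circ=\{\lambda\in F':\langle\lambda,\Phi(\zeta)\rangle\ge0\ \forall\zeta\in E\}$. *)

theory Defs
  imports "HOL-Analysis.Analysis" "HOL-Probability.Essential_Supremum"
begin

text \<open>Finite-dimensional setting (Lebesgue measure on N requires it):
  E = complex^'n (complex Hilbert space), F = real^'m (real Hilbert space),
  F' identified with F via the inner product, F_C = complex^'m.\<close>

definition hermitian_map :: "(complex^'n \<Rightarrow> complex^'n \<Rightarrow> complex^'m) \<Rightarrow> bool" where
  "hermitian_map Phi \<longleftrightarrow>
     (\<forall>a b c. Phi (a + b) c = Phi a c + Phi b c) \<and>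
     (\<forall>c a b. Phi (c *s a) b = c *s Phi a b) \<and>
     (\<forall>a b c. Phi a (b + c) = Phi a b + Phi a c) \<and>
     (\<forall>c a b. Phi a (c *s b) = cnj c *s Phi a b) \<and>
     (\<forall>a b. Phi b a = (\<chi> j. cnj (Phi a b $ j)))"

definition PhiF :: "(complex^'n \<Rightarrow> complex^'n \<Rightarrow> complex^'m) \<Rightarrow> complex^'n \<Rightarrow> real^'m" where
  "PhiF Phi \<zeta> = (\<chi> j. Re (Phi \<zeta> \<zeta> $ j))"

definition ReF :: "complex^'m \<Rightarrow> real^'m" where "ReF z = (\<chi> j. Re (z $ j))"
definition ImF :: "complex^'m \<Rightarrow> real^'m" where "ImF z = (\<chi> j. Im (z $ j))"
definition ofF :: "real^'m \<Rightarrow> complex^'m" where "ofF x = (\<chi> j. complex_of_real (x $ j))"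

definition lamC :: "real^'m \<Rightarrow> complex^'m \<Rightarrow> complex" where
  "lamC l z = (\<Sum>j\<in>UNIV. complex_of_real (l $ j) * z $ j)"

definition rho :: "(complex^'n \<Rightarrow> complex^'n \<Rightarrow> complex^'m) \<Rightarrow> complex^'n \<Rightarrow> complex^'m \<Rightarrow> real^'m" where
  "rho Phi \<zeta> z = ImF z - PhiF Phi \<zeta>"

definition f0 :: "(complex^'n \<Rightarrow> complex^'n \<Rightarrow> complex^'m) \<Rightarrow> ((complex^'n) \<times> (complex^'m) \<Rightarrow> complex)
                  \<Rightarrow> (complex^'n) \<times> (real^'m) \<Rightarrow> complex" where
  "f0 Phi f = (\<lambda>(\<zeta>, x). f (\<zeta>, ofF x + \<i> *s ofF (PhiF Phi \<zeta>)))"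

text \<open>Support function H_K(h) = sup over lambda in -K of <lambda,h> (extended real; -infinity for empty K).\<close>
definition HK :: "(real^'m) set \<Rightarrow> real^'m \<Rightarrow> ereal" where
  "HK K h = (SUP l\<in>uminus ` K. ereal (l \<bullet> h))"

definition exp_ereal :: "ereal \<Rightarrow> ereal" where
  "exp_ereal x = (case x of ereal r \<Rightarrow> ereal (exp r) | PInfty \<Rightarrow> \<infinity> | MInfty \<Rightarrow> 0)"

definition msum_ball :: "(real^'m) set \<Rightarrow> real \<Rightarrow> (real^'m) set" where
  "msum_ball K e = {k + b | k b. k \<in> K \<and> b \<in> cball 0 e}"

definition entire_fun :: "((complex^'n) \<times> (complex^'m) \<Rightarrow> complex) \<Rightarrow> bool" where
  "entire_fun f \<longleftrightarrow> (\<forall>x. \<exists>L. (f has_derivative L) (at x) \<and>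
      (\<forall>c v. L (c *s fst v, c *s snd v) = c * L v))"

definition Etilde :: "(complex^'n \<Rightarrow> complex^'n \<Rightarrow> complex^'m) \<Rightarrow> (real^'m) set
                      \<Rightarrow> ((complex^'n) \<times> (complex^'m) \<Rightarrow> complex) set" where
  "Etilde Phi K = {f. entire_fun f \<and>
     (\<forall>e>0. \<exists>C. \<forall>\<zeta> z. ereal (norm (f (\<zeta>, z)))
        \<le> ereal (C * exp (C * ((norm \<zeta>)\<^sup>2 + norm (ReF z)))) * exp_ereal (HK (msum_ball K e) (rho Phi \<zeta> z)))}"

text \<open>L^p on N = E x F with Lebesgue measure, p in (0,infinity].\<close>
definition memLp :: "ennreal \<Rightarrow> ('a::euclidean_space \<Rightarrow> complex) \<Rightarrow> bool" where
  "memLp p g \<longleftrightarrow> g \<in> borel_measurable lborel \<and>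
     (if p = \<infinity> then esssup lborel (\<lambda>x. ereal (norm (g x))) < \<infinity>
      else (\<integral>\<^sup>+ x. ennreal (norm (g x) powr enn2real p) \<partial>lborel) < \<infinity>)"

definition Lp_norm :: "ennreal \<Rightarrow> ('a::euclidean_space \<Rightarrow> complex) \<Rightarrow> real" where
  "Lp_norm p g = (if p = \<infinity> then real_of_ereal (esssup lborel (\<lambda>x. ereal (norm (g x))))
      else (enn2real (\<integral>\<^sup>+ x. ennreal (norm (g x) powr enn2real p) \<partial>lborel)) powr (1 / enn2real p))"

definition Bspace :: "(complex^'n \<Rightarrow> complex^'n \<Rightarrow> complex^'m) \<Rightarrow> ennreal \<Rightarrow> (real^'m) set
                      \<Rightarrow> ((complex^'n) \<times> (complex^'m) \<Rightarrow> complex) set" where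
  "Bspace Phi p K = {f \<in> Etilde Phi K. memLp p (f0 Phi f)}"

definition Bnorm :: "(complex^'n \<Rightarrow> complex^'n \<Rightarrow> complex^'m) \<Rightarrow> ennreal
                     \<Rightarrow> ((complex^'n) \<times> (complex^'m) \<Rightarrow> complex) \<Rightarrow> real" where
  "Bnorm Phi p f = Lp_norm p (f0 Phi f)"

definition polar_PhiE :: "(complex^'n \<Rightarrow> complex^'n \<Rightarrow> complex^'m) \<Rightarrow> (real^'m) set" where
  "polar_PhiE Phi = {l. \<forall>\<zeta>. l \<bullet> PhiF Phi \<zeta> \<ge> 0}"

definition mult_exp :: "real^'m \<Rightarrow> ((complex^'n) \<times> (complex^'m) \<Rightarrow> complex) \<Rightarrow> ((complex^'n) \<times> (complex^'m) \<Rightarrow> complex)" where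
  "mult_exp l f = (\<lambda>(\<zeta>, z). exp (\<i> * lamC l z) * f (\<zeta>, z))"

text \<open>T maps B^p_K into B^p_{K'} and is continuous for the (quasi-)norm topologies
  (these are metrizable, so sequential continuity is continuity).\<close>
definition cont_map_B :: "(complex^'n \<Rightarrow> complex^'n \<Rightarrow> complex^'m) \<Rightarrow> ennreal \<Rightarrow> (real^'m) set \<Rightarrow> (real^'m) set
     \<Rightarrow> (((complex^'n) \<times> (complex^'m) \<Rightarrow> complex) \<Rightarrow> ((complex^'n) \<times> (complex^'m) \<Rightarrow> complex)) \<Rightarrow> bool" where
  "cont_map_B Phi p K K' T \<longleftrightarrow>
     (\<forall>f\<in>Bspace Phi p K. T f \<in> Bspace Phi p K') \<and>
     (\<forall>fs f. (\<forall>k. fs k \<in> Bspace Phi p K) \<longrightarrow> f \<in> Bspace Phi p K \<longrightarrow>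
        (\<lambda>k. Bnorm Phi p (fs k - f)) \<longlonglongrightarrow> 0 \<longrightarrow>
        (\<lambda>k. Bnorm Phi p (T (fs k) - T f)) \<longlonglongrightarrow> 0)"

end

theory Submission
  imports Defs "HOL-Complex_Analysis.Conformal_Mappings"
begin
context
  fixes Phi :: "complex^'n \<Rightarrow> complex^'n \<Rightarrow> complex^'m"
  assumes H: "hermitian_map Phi"
begin

lemma Phi_addL: "Phi (a + b) c = Phi a c + Phi b c" using H unfolding hermitian_map_def by blast
lemma Phi_smultL: "Phi (c *s a) b = c *s Phi a b" using H unfolding hermitian_map_def by blast
lemma Phi_addR: "Phi a (b + c) = Phi a b + Phi a c" using H unfolding hermitian_map_def by blast
lemma Phi_smultR: "Phi a (c *s b) = cnj c *s Phi a b" using H unfolding hermitian_map_def by blast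
lemma Phi_sym: "Phi b a $ j = cnj (Phi a b $ j)"
proof -
  have "Phi b a = (\<chi> j. cnj (Phi a b $ j))" using H unfolding hermitian_map_def by blast
  then show ?thesis by simp
qed

lemma Phi_zeroL: "Phi 0 b = 0"
  using Phi_smultL[of 0 0 b] by simp
lemma Phi_zeroR: "Phi a 0 = 0"
  using Phi_smultR[of a 0 0] by simp
lemma Phi_diag_real: "Im (Phi a a $ j) = 0"
  using Phi_sym[of a a j] by (simp add: complex_eq_iff)

lemma scaleR_vec_c: "(r::real) *\<^sub>R (v::complex^'k) = complex_of_real r *s v"
proof (rule vec_eq_iff[THEN iffD2], rule allI)
  fix i show "(r *\<^sub>R v) $ i = (complex_of_real r *s v) $ i"
    unfolding vector_scaleR_component vector_smult_component by (rule scaleR_conv_of_real)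
qed

lemma Phi_bilinear: "bilinear Phi"
  unfolding bilinear_def
proof safe
  fix a show "linear (Phi a)"
    by (rule linearI) (simp_all add: Phi_addR Phi_smultR scaleR_vec_c)
next
  fix b show "linear (\<lambda>a. Phi a b)"
    by (rule linearI) (simp_all add: Phi_addL Phi_smultL scaleR_vec_c)
qed

lemma Phi_bound: "\<exists>C>0. \<forall>a b. norm (Phi a b) \<le> C * norm a * norm b"
proof -
  have "bounded_bilinear Phi" using Phi_bilinear bilinear_conv_bounded_bilinear by blast
  then obtain K where K: "K > 0" "\<And>a b. norm (Phi a b) \<le> norm a * norm b * K"
    using bounded_bilinear.pos_bounded by blast
  show ?thesis
    by (rule exI[of _ K]) (use K in \<open>auto simp: algebra_simps\<close>)
qed

end

lemma Lp_norm_cong_norm: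
  assumes "\<And>x. norm (F x) = norm (G x)" shows "Lp_norm p F = Lp_norm p G"
  unfolding Lp_norm_def by (simp add: assms)

lemma memLp_cong_norm:
  assumes "memLp p G" "F \<in> borel_measurable lborel" "\<And>x. norm (F x) = norm (G x)"
  shows "memLp p F"
  using assms unfolding memLp_def by (cases "p = \<infinity>") (simp_all add: assms)

lemma esssup_norm_nonneg:
  fixes F :: "'a::euclidean_space \<Rightarrow> complex"
  shows "0 \<le> esssup lborel (\<lambda>x. ereal (norm (F x)))"
proof (cases "(\<lambda>x. ereal (norm (F x))) \<in> borel_measurable lborel")
  case True
  have "esssup lborel (\<lambda>x::'a. 0::ereal) \<le> esssup lborel (\<lambda>x. ereal (norm (F x)))"
    using esssup_mono[of "\<lambda>x. 0::ereal" lborel "\<lambda>x. ereal (norm (F x))"] by simp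
  moreover have "esssup lborel (\<lambda>x::'a. 0::ereal) = 0"
    by (rule esssup_const) simp
  ultimately show ?thesis by simp
next
  case False
  then show ?thesis by (simp add: esssup_non_measurable)
qed

lemma Lp_norm_nonneg: "0 \<le> Lp_norm p (F :: 'a::euclidean_space \<Rightarrow> complex)"
  unfolding Lp_norm_def using esssup_norm_nonneg[of F]
  by (auto simp: real_of_ereal_pos)

lemma enn2real_p_pos: "p > 0 \<Longrightarrow> p \<noteq> \<infinity> \<Longrightarrow> enn2real p > 0"
  by (simp add: enn2real_positive_iff less_top)

lemma Lp_norm_mono:
  fixes F G :: "'a::euclidean_space \<Rightarrow> complex"
  assumes p: "p > 0" and G: "memLp p G" and F: "F \<in> borel_measurable lborel"
    and le: "\<And>x. norm (F x) \<le> norm (G x)"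
  shows "memLp p F \<and> Lp_norm p F \<le> Lp_norm p G"
proof (cases "p = \<infinity>")
  case True
  have Fm: "(\<lambda>x. ereal (norm (F x))) \<in> borel_measurable lborel" using F by measurable
  have "esssup lborel (\<lambda>x. ereal (norm (F x))) \<le> esssup lborel (\<lambda>x. ereal (norm (G x)))"
    by (rule esssup_mono[OF Fm]) (simp add: le)
  moreover have "esssup lborel (\<lambda>x. ereal (norm (G x))) < \<infinity>" using G True by (simp add: memLp_def)
  ultimately show ?thesis using True F esssup_norm_nonneg[of F]
    by (auto simp: memLp_def Lp_norm_def intro!: real_of_ereal_positive_mono)
next
  case False
  define q where "q = enn2real p"
  have q: "q > 0" using enn2real_p_pos[OF p False] q_def by simp
  have pw: "norm (F x) powr q \<le> norm (G x) powr q" for x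
    using q le by (intro powr_mono2) auto
  have I: "(\<integral>\<^sup>+ x. ennreal (norm (F x) powr q) \<partial>lborel) \<le> (\<integral>\<^sup>+ x. ennreal (norm (G x) powr q) \<partial>lborel)"
    by (intro nn_integral_mono) (simp add: pw)
  have Gf: "(\<integral>\<^sup>+ x. ennreal (norm (G x) powr q) \<partial>lborel) < \<infinity>" using G False q_def by (simp add: memLp_def)
  have "enn2real (\<integral>\<^sup>+ x. ennreal (norm (F x) powr q) \<partial>lborel) \<le> enn2real (\<integral>\<^sup>+ x. ennreal (norm (G x) powr q) \<partial>lborel)"
    using I Gf by (intro enn2real_mono) auto
  then have "enn2real (\<integral>\<^sup>+ x. ennreal (norm (F x) powr q) \<partial>lborel) powr (1/q) \<le> enn2real (\<integral>\<^sup>+ x. ennreal (norm (G x) powr q) \<partial>lborel) powr (1/q)"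
    using q by (intro powr_mono2) auto
  then show ?thesis using False F I Gf q_def by (auto simp: memLp_def Lp_norm_def)
qed

lemma memLp_diff:
  fixes F G :: "'a::euclidean_space \<Rightarrow> complex"
  assumes p: "p > 0" and F: "memLp p F" and G: "memLp p G"
  shows "memLp p (\<lambda>x. F x - G x)"
proof -
  have Fm[measurable]: "F \<in> borel_measurable lborel" and Gm[measurable]: "G \<in> borel_measurable lborel"
    using F G by (auto simp: memLp_def)
  show ?thesis
  proof (cases "p = \<infinity>")
    case True
    have "esssup lborel (\<lambda>x. ereal (norm (F x - G x))) \<le> esssup lborel (\<lambda>x. ereal (norm (F x)) + ereal (norm (G x)))"
      by (rule esssup_mono) (auto simp: norm_triangle_ineq4)
    also have "\<dots> \<le> esssup lborel (\<lambda>x. ereal (norm (F x))) + esssup lborel (\<lambda>x. ereal (norm (G x)))"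
      by (rule esssup_add)
    also have "\<dots> < \<infinity>" using F G True by (simp add: memLp_def)
    finally show ?thesis using True by (simp add: memLp_def)
  next
    case False
    define q where "q = enn2real p"
    have q: "q > 0" using enn2real_p_pos[OF p False] q_def by simp
    have pw: "norm (F x - G x) powr q \<le> 2 powr q * (norm (F x) powr q + norm (G x) powr q)" for x
    proof -
      have "norm (F x - G x) \<le> 2 * max (norm (F x)) (norm (G x))"
        using norm_triangle_ineq4[of "F x" "G x"] by linarith
      then have "norm (F x - G x) powr q \<le> (2 * max (norm (F x)) (norm (G x))) powr q"
        using q by (intro powr_mono2) auto
      also have "\<dots> = 2 powr q * max (norm (F x)) (norm (G x)) powr q"
        by (simp add: powr_mult)
      also have "max (norm (F x)) (norm (G x)) powr q \<le> norm (F x) powr q + norm (G x) powr q"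
        by (cases "norm (F x) \<le> norm (G x)") (auto simp: max_def)
      finally show ?thesis by simp
    qed
    have "(\<integral>\<^sup>+ x. ennreal (norm (F x - G x) powr q) \<partial>lborel)
        \<le> (\<integral>\<^sup>+ x. ennreal (2 powr q) * (ennreal (norm (F x) powr q) + ennreal (norm (G x) powr q)) \<partial>lborel)"
      by (intro nn_integral_mono) (simp add: pw ennreal_mult[symmetric] ennreal_plus[symmetric] del: ennreal_plus)
    also have "\<dots> = ennreal (2 powr q) * ((\<integral>\<^sup>+ x. ennreal (norm (F x) powr q) \<partial>lborel) + (\<integral>\<^sup>+ x. ennreal (norm (G x) powr q) \<partial>lborel))"
      by (simp add: nn_integral_cmult nn_integral_add)
    also have "\<dots> < \<infinity>" using F G False q_def
      by (simp add: memLp_def ennreal_mult_less_top)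
    finally show ?thesis using False q_def by (simp add: memLp_def)
  qed
qed

lemma Lp_norm_scale:
  fixes F :: "'a::euclidean_space \<Rightarrow> complex"
  assumes p: "p > 0" and c: "c > 0" and F[measurable]: "F \<in> borel_measurable lborel"
  shows "Lp_norm p (\<lambda>x. complex_of_real c * F x) = c * Lp_norm p F"
proof (cases "p = \<infinity>")
  case True
  have "esssup lborel (\<lambda>x. ereal (norm (complex_of_real c * F x))) = esssup lborel (\<lambda>x. ereal c * ereal (norm (F x)))"
    using c by (simp add: norm_mult)
  also have "\<dots> = ereal c * esssup lborel (\<lambda>x. ereal (norm (F x)))"
    by (rule esssup_cmult[OF c])
  finally show ?thesis using True by (simp add: Lp_norm_def)
next
  case False
  define q where "q = enn2real p"
  have q: "q > 0" using enn2real_p_pos[OF p False] q_def by simp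
  have "(\<integral>\<^sup>+ x. ennreal (norm (complex_of_real c * F x) powr q) \<partial>lborel)
      = (\<integral>\<^sup>+ x. ennreal (c powr q) * ennreal (norm (F x) powr q) \<partial>lborel)"
    using c by (intro nn_integral_cong) (simp add: norm_mult powr_mult ennreal_mult)
  also have "\<dots> = ennreal (c powr q) * (\<integral>\<^sup>+ x. ennreal (norm (F x) powr q) \<partial>lborel)"
    by (simp add: nn_integral_cmult)
  finally have I: "enn2real (\<integral>\<^sup>+ x. ennreal (norm (complex_of_real c * F x) powr q) \<partial>lborel)
     = c powr q * enn2real (\<integral>\<^sup>+ x. ennreal (norm (F x) powr q) \<partial>lborel)"
    by (simp add: enn2real_mult)
  have "(c powr q * enn2real (\<integral>\<^sup>+ x. ennreal (norm (F x) powr q) \<partial>lborel)) powr (1/q)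
     = c * enn2real (\<integral>\<^sup>+ x. ennreal (norm (F x) powr q) \<partial>lborel) powr (1/q)"
    using c q by (simp add: powr_mult powr_powr)
  then show ?thesis using False I q_def by (simp add: Lp_norm_def)
qed

lemma content_ball_pos': "r > 0 \<Longrightarrow> emeasure lborel (ball (a::'a::euclidean_space) r) \<noteq> 0"
  using content_ball_pos[of r a] by (metis measure_def enn2real_0 less_irrefl)

lemma Lp_lower_ball:
  fixes F :: "'a::euclidean_space \<Rightarrow> complex"
  assumes p: "p > 0" and F: "memLp p F" and r: "r > 0" and d: "0 \<le> d"
    and lb: "\<And>x. x \<in> ball a r \<Longrightarrow> d \<le> norm (F x)"
  shows "d * (if p = \<infinity> then 1 else measure lborel (ball a r) powr (1 / enn2real p)) \<le> Lp_norm p F"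
proof (cases "p = \<infinity>")
  case True
  have Fm[measurable]: "F \<in> borel_measurable lborel" using F by (simp add: memLp_def)
  have fin: "esssup lborel (\<lambda>x. ereal (norm (F x))) < \<infinity>" using F True by (simp add: memLp_def)
  have ge: "ereal d \<le> esssup lborel (\<lambda>x. ereal (norm (F x)))"
  proof (rule ccontr)
    assume "\<not> ?thesis"
    then have lt: "esssup lborel (\<lambda>x. ereal (norm (F x))) < ereal d" by simp
    have "AE x in lborel. ereal (norm (F x)) \<le> esssup lborel (\<lambda>x. ereal (norm (F x)))"
      by (rule esssup_AE)
    then have "AE x in lborel. x \<notin> ball a r"
    proof (rule eventually_mono)
      fix x assume "ereal (norm (F x)) \<le> esssup lborel (\<lambda>x. ereal (norm (F x)))"
      with lt have "norm (F x) < d" by (metis ereal_less(2) le_less_trans less_ereal.simps(1))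
      then show "x \<notin> ball a r" using lb by force
    qed
    then obtain N where N: "{x \<in> space lborel. \<not> x \<notin> ball a r} \<subseteq> N" "emeasure lborel N = 0" "N \<in> sets lborel"
      by (rule AE_E)
    have "emeasure lborel (ball a r) \<le> emeasure lborel N"
      using N by (intro emeasure_mono) auto
    then show False using N content_ball_pos'[OF r, of a] by auto
  qed
  have "d \<le> real_of_ereal (esssup lborel (\<lambda>x. ereal (norm (F x))))"
  proof -
    obtain e where "esssup lborel (\<lambda>x. ereal (norm (F x))) = ereal e"
      using ge fin by (cases "esssup lborel (\<lambda>x. ereal (norm (F x)))") auto
    then show ?thesis using ge by simp
  qed
  then show ?thesis using True by (simp add: Lp_norm_def)
next
  case False
  define q where "q = enn2real p"
  have q: "q > 0" using enn2real_p_pos[OF p False] q_def by simp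
  have fin: "(\<integral>\<^sup>+ x. ennreal (norm (F x) powr q) \<partial>lborel) < \<infinity>" using F False q_def by (simp add: memLp_def)
  have "ennreal (d powr q) * emeasure lborel (ball a r) = (\<integral>\<^sup>+ x. ennreal (d powr q) * indicator (ball a r) x \<partial>lborel)"
    by (simp add: nn_integral_cmult_indicator)
  also have "\<dots> \<le> (\<integral>\<^sup>+ x. ennreal (norm (F x) powr q) \<partial>lborel)"
  proof (intro nn_integral_mono)
    fix x show "ennreal (d powr q) * indicator (ball a r) x \<le> ennreal (norm (F x) powr q)"
    proof (cases "x \<in> ball a r")
      case True
      then have "d powr q \<le> norm (F x) powr q" using lb[OF True] d q by (intro powr_mono2) auto
      then show ?thesis using True by simp
    qed simp
  qed
  finally have I: "ennreal (d powr q) * emeasure lborel (ball a r) \<le> (\<integral>\<^sup>+ x. ennreal (norm (F x) powr q) \<partial>lborel)" .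
  have em: "emeasure lborel (ball a r) = ennreal (measure lborel (ball a r))"
    using emeasure_lborel_ball_finite[of a r] by (intro emeasure_eq_ennreal_measure) auto
  have "d powr q * measure lborel (ball a r) \<le> enn2real (\<integral>\<^sup>+ x. ennreal (norm (F x) powr q) \<partial>lborel)"
  proof -
    have "enn2real (ennreal (d powr q) * emeasure lborel (ball a r)) \<le> enn2real (\<integral>\<^sup>+ x. ennreal (norm (F x) powr q) \<partial>lborel)"
      using I fin by (intro enn2real_mono) auto
    then show ?thesis using em by (simp add: enn2real_mult)
  qed
  then have "(d powr q * measure lborel (ball a r)) powr (1/q) \<le> enn2real (\<integral>\<^sup>+ x. ennreal (norm (F x) powr q) \<partial>lborel) powr (1/q)"
    using q d by (intro powr_mono2) auto
  moreover have "(d powr q * measure lborel (ball a r)) powr (1/q) = d * measure lborel (ball a r) powr (1/q)"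
    using q d by (simp add: powr_mult powr_powr)
  ultimately show ?thesis using False q_def by (simp add: Lp_norm_def)
qed

lemma kappa_pos: "r > 0 \<Longrightarrow> 0 < (if p = \<infinity> then 1 else measure lborel (ball (a::'a::euclidean_space) r) powr (1 / enn2real p))"
  using content_ball_pos[of r a] by simp

lemma nn_integral_lborel_translate:
  fixes g :: "'a::euclidean_space \<Rightarrow> ennreal"
  assumes [measurable]: "g \<in> borel_measurable borel"
  shows "(\<integral>\<^sup>+ x. g (x + c) \<partial>lborel) = (\<integral>\<^sup>+ x. g x \<partial>lborel)"
proof -
  have "(\<integral>\<^sup>+ x. g x \<partial>lborel) = integral\<^sup>N (distr lborel borel ((+) c)) g"
    by (simp add: lborel_distr_plus)
  also have "\<dots> = (\<integral>\<^sup>+ x. g (c + x) \<partial>lborel)"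
    by (rule nn_integral_distr) auto
  finally show ?thesis by (simp add: add.commute)
qed

lemma shear_nn:
  fixes H :: "('a::euclidean_space \<times> 'b::euclidean_space) \<Rightarrow> ennreal" and L :: "'a \<Rightarrow> 'b"
  assumes H[measurable]: "H \<in> borel_measurable borel" and L: "continuous_on UNIV L"
  shows "(\<integral>\<^sup>+ y. H (fst y + w, snd y + L (fst y)) \<partial>lborel) = (\<integral>\<^sup>+ y. H y \<partial>lborel)"
proof -
  have Sc: "(\<lambda>y::'a\<times>'b. (fst y + w, snd y + L (fst y))) \<in> borel_measurable borel"
    by (intro borel_measurable_continuous_onI continuous_intros continuous_on_compose2[OF L]) auto
  have m1: "(\<lambda>y. H (fst y + w, snd y + L (fst y))) \<in> borel_measurable (lborel \<Otimes>\<^sub>M lborel)"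
    unfolding lborel_prod using measurable_compose[OF Sc H] by simp
  have m2: "H \<in> borel_measurable (lborel \<Otimes>\<^sub>M lborel)"
    unfolding lborel_prod by measurable
  have "(\<integral>\<^sup>+ y. H (fst y + w, snd y + L (fst y)) \<partial>lborel)
     = (\<integral>\<^sup>+ y. H (fst y + w, snd y + L (fst y)) \<partial>(lborel \<Otimes>\<^sub>M lborel))"
    by (simp only: lborel_prod)
  also have "\<dots> = (\<integral>\<^sup>+ a. \<integral>\<^sup>+ b. H (a + w, b + L a) \<partial>lborel \<partial>lborel)"
    using lborel.nn_integral_fst[OF m1] by simp
  also have "\<dots> = (\<integral>\<^sup>+ a. \<integral>\<^sup>+ b. H (a + w, b) \<partial>lborel \<partial>lborel)"
  proof (rule nn_integral_cong)
    fix a show "(\<integral>\<^sup>+ b. H (a + w, b + L a) \<partial>lborel) = (\<integral>\<^sup>+ b. H (a + w, b) \<partial>lborel)"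
    proof (rule nn_integral_lborel_translate[of "\<lambda>b. H (a + w, b)"])
      have "(\<lambda>b::'b. (a + w, b)) \<in> borel_measurable borel"
        by (intro borel_measurable_continuous_onI continuous_intros)
      then show "(\<lambda>b. H (a + w, b)) \<in> borel_measurable borel" using measurable_compose[OF _ H] by blast
    qed
  qed
  also have "\<dots> = (\<integral>\<^sup>+ a. \<integral>\<^sup>+ b. H (a, b) \<partial>lborel \<partial>lborel)"
  proof (rule nn_integral_lborel_translate[of "\<lambda>a. \<integral>\<^sup>+ b. H (a, b) \<partial>lborel"])
    show "(\<lambda>a. \<integral>\<^sup>+ b. H (a, b) \<partial>lborel) \<in> borel_measurable borel"
      using lborel.borel_measurable_nn_integral_fst[OF m2] by simp
  qed
  also have "\<dots> = (\<integral>\<^sup>+ y. H y \<partial>(lborel \<Otimes>\<^sub>M lborel))"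
    using lborel.nn_integral_fst[OF m2] by simp
  also have "\<dots> = (\<integral>\<^sup>+ y. H y \<partial>lborel)"
    by (simp only: lborel_prod)
  finally show ?thesis .
qed

lemma shear_emeasure:
  fixes L :: "'a::euclidean_space \<Rightarrow> 'b::euclidean_space"
  assumes A: "A \<in> sets borel" and L: "continuous_on UNIV L"
  shows "emeasure lborel {y. (fst y + w, snd y + L (fst y)) \<in> A} = emeasure lborel A"
proof -
  have "emeasure lborel {y. (fst y + w, snd y + L (fst y)) \<in> A}
      = (\<integral>\<^sup>+ y. indicator A (fst y + w, snd y + L (fst y)) \<partial>lborel)"
  proof -
    have Sc: "(\<lambda>y::'a\<times>'b. (fst y + w, snd y + L (fst y))) \<in> borel_measurable borel"
      by (intro borel_measurable_continuous_onI continuous_intros continuous_on_compose2[OF L]) auto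
    have "{y. (fst y + w, snd y + L (fst y)) \<in> A} \<in> sets lborel"
      using measurable_sets[OF Sc A] by (simp add: vimage_def)
    then have "emeasure lborel {y. (fst y + w, snd y + L (fst y)) \<in> A} = (\<integral>\<^sup>+ y. indicator {y. (fst y + w, snd y + L (fst y)) \<in> A} y \<partial>lborel)"
      by (intro nn_integral_indicator[symmetric]) simp
    also have "\<dots> = (\<integral>\<^sup>+ y. indicator A (fst y + w, snd y + L (fst y)) \<partial>lborel)"
      by (intro nn_integral_cong) (auto split: split_indicator)
    finally show ?thesis .
  qed
  also have "\<dots> = (\<integral>\<^sup>+ y. indicator A y \<partial>lborel)"
    by (rule shear_nn) (use A L in auto)
  also have "\<dots> = emeasure lborel A" using A by simp
  finally show ?thesis .
qed

lemma shear_Lp: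
  fixes F :: "('a::euclidean_space \<times> 'b::euclidean_space) \<Rightarrow> complex" and L :: "'a \<Rightarrow> 'b"
  assumes F[measurable]: "F \<in> borel_measurable borel" and L: "continuous_on UNIV L"
  shows "memLp p (\<lambda>y. F (fst y + w, snd y + L (fst y))) = memLp p F"
    and "Lp_norm p (\<lambda>y. F (fst y + w, snd y + L (fst y))) = Lp_norm p F"
proof -
  define S where "S = (\<lambda>y::'a\<times>'b. (fst y + w, snd y + L (fst y)))"
  have Sm[measurable]: "S \<in> borel_measurable borel" unfolding S_def
    by (intro borel_measurable_continuous_onI continuous_intros continuous_on_compose2[OF L]) auto
  have I: "(\<integral>\<^sup>+ y. ennreal (norm (F (S y)) powr q) \<partial>lborel) = (\<integral>\<^sup>+ y. ennreal (norm (F y) powr q) \<partial>lborel)" for q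
    unfolding S_def by (rule shear_nn[of "\<lambda>y. ennreal (norm (F y) powr q)"]) (use L in measurable)
  have E: "esssup lborel (\<lambda>y. ereal (norm (F (S y)))) = esssup lborel (\<lambda>y. ereal (norm (F y)))"
  proof -
    have e: "emeasure lborel {y \<in> space lborel. ereal (norm (F (S y))) > z} = emeasure lborel {y \<in> space lborel. ereal (norm (F y)) > z}" for z
    proof -
      have A: "{y. ereal (norm (F y)) > z} \<in> sets borel" by measurable
      show ?thesis using shear_emeasure[OF A L, of w] unfolding S_def by simp
    qed
    have m1: "(\<lambda>y. ereal (norm (F (S y)))) \<in> borel_measurable lborel" by measurable
    have m2: "(\<lambda>y. ereal (norm (F y))) \<in> borel_measurable lborel" by measurable
    show ?thesis unfolding esssup_eq[OF m1] esssup_eq[OF m2] e ..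
  qed
  have M: "(\<lambda>y. F (S y)) \<in> borel_measurable lborel" by measurable
  show "memLp p (\<lambda>y. F (fst y + w, snd y + L (fst y))) = memLp p F"
    using I E M unfolding S_def memLp_def by simp
  show "Lp_norm p (\<lambda>y. F (fst y + w, snd y + L (fst y))) = Lp_norm p F"
    using I E unfolding S_def Lp_norm_def by simp
qed

lemma ReF_nth[simp]: "ReF z $ j = Re (z $ j)" by (simp add: ReF_def)
lemma ImF_nth[simp]: "ImF z $ j = Im (z $ j)" by (simp add: ImF_def)
lemma ofF_nth[simp]: "ofF x $ j = complex_of_real (x $ j)" by (simp add: ofF_def)
lemma PhiF_nth[simp]: "PhiF Phi a $ j = Re (Phi a a $ j)" by (simp add: PhiF_def)

lemma norm_ReF_le: "norm (ReF z) \<le> norm z"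
  unfolding norm_vec_def by (intro L2_set_mono) (auto simp: abs_Re_le_cmod)
lemma norm_ImF_le: "norm (ImF z) \<le> norm z"
  unfolding norm_vec_def by (intro L2_set_mono) (auto simp: abs_Im_le_cmod)

lemma norm_exp_lamC: "norm (exp (\<i> * lamC l z)) = exp (- (l \<bullet> ImF z))"
proof -
  have "Re (\<i> * lamC l z) = - (l \<bullet> ImF z)"
    by (simp add: lamC_def inner_vec_def Re_sum Im_sum sum_negf[symmetric])
  then show ?thesis by simp
qed

lemma scaleR_vec_c': "(r::real) *\<^sub>R (v::complex^'k) = complex_of_real r *s v"
proof (rule vec_eq_iff[THEN iffD2], rule allI)
  fix i show "(r *\<^sub>R v) $ i = (complex_of_real r *s v) $ i"
    unfolding vector_scaleR_component vector_smult_component by (rule scaleR_conv_of_real)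
qed

lemma lamC_smult: "lamC l (c *s v) = c * lamC l v"
  by (simp add: lamC_def sum_distrib_left algebra_simps)

lemma lamC_linear: "linear (lamC l)"
  by (rule linearI) (simp_all add: lamC_def sum.distrib algebra_simps scaleR_vec_c' lamC_smult[unfolded lamC_def] scaleR_conv_of_real sum_distrib_left)

lemma f0_alt: "f0 Phi f = (\<lambda>y. f (fst y, ofF (snd y) + \<i> *s ofF (PhiF Phi (fst y))))"
  by (auto simp: f0_def fun_eq_iff split: prod.split)

lemma mult_exp_alt: "mult_exp l f = (\<lambda>y. exp (\<i> * lamC l (snd y)) * f y)"
  by (auto simp: mult_exp_def fun_eq_iff split: prod.split)

lemma inner_le_norms: "\<bar>(l::real^'m) \<bullet> v\<bar> \<le> norm l * norm v"
  by (rule Cauchy_Schwarz_ineq2)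

context
  fixes Phi :: "complex^'n \<Rightarrow> complex^'n \<Rightarrow> complex^'m"
  assumes H: "hermitian_map Phi"
begin

lemma ofF_PhiF: "ofF (PhiF Phi a) = Phi a a"
  using Phi_diag_real[OF H] by (simp add: vec_eq_iff complex_eq_iff)

lemma norm_PhiF_le: "norm (PhiF Phi a) \<le> norm (Phi a a)"
proof -
  have "PhiF Phi a = ReF (Phi a a)" by (simp add: vec_eq_iff)
  then show ?thesis using norm_ReF_le by simp
qed

lemma PhiF_add: "PhiF Phi (a + b) = PhiF Phi a + PhiF Phi b + 2 *\<^sub>R ReF (Phi a b)"
  using Phi_sym[OF H, of a b] by (simp add: vec_eq_iff Phi_addL[OF H] Phi_addR[OF H])

lemma Phi_minusL: "Phi (- a) b = - Phi a b"
  using Phi_smultL[OF H, of "-1" a b] by (simp add: vec_eq_iff)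
lemma Phi_minusR: "Phi a (- b) = - Phi a b"
  using Phi_smultR[OF H, of a "-1" b] by (simp add: vec_eq_iff)

lemma PhiF_minus: "PhiF Phi (- a) = PhiF Phi a"
  by (simp add: vec_eq_iff Phi_minusL Phi_minusR)

lemma PhiF_scale: "PhiF Phi (complex_of_real t *s a) = t\<^sup>2 *\<^sub>R PhiF Phi a"
  by (simp add: vec_eq_iff Phi_smultL[OF H] Phi_smultR[OF H] power2_eq_square)

lemma ReF_Phi_scaleR: "ReF (Phi a (complex_of_real t *s b)) = t *\<^sub>R ReF (Phi a b)"
  by (simp add: vec_eq_iff Phi_smultR[OF H])

end

lemma entire_const: "entire_fun (\<lambda>y. c)"
  unfolding entire_fun_def by (auto intro!: exI[of _ "\<lambda>_. 0"])

lemma entire_mult: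
  assumes f: "entire_fun f" and g: "entire_fun g"
  shows "entire_fun (\<lambda>y. f y * g y)"
  unfolding entire_fun_def
proof
  fix x
  obtain Lf where Lf: "(f has_derivative Lf) (at x)" "\<And>c v. Lf (c *s fst v, c *s snd v) = c * Lf v"
    using f unfolding entire_fun_def by blast
  obtain Lg where Lg: "(g has_derivative Lg) (at x)" "\<And>c v. Lg (c *s fst v, c *s snd v) = c * Lg v"
    using g unfolding entire_fun_def by blast
  show "\<exists>L. ((\<lambda>y. f y * g y) has_derivative L) (at x) \<and> (\<forall>c v. L (c *s fst v, c *s snd v) = c * L v)"
    by (rule exI[of _ "\<lambda>h. f x * Lg h + Lf h * g x"], rule conjI, rule has_derivative_mult[OF Lf(1) Lg(1)])
       (simp add: Lf(2) Lg(2) algebra_simps)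
qed

lemma entire_exp_lamC:
  fixes l :: "real^'m"
  shows "entire_fun (\<lambda>y::(complex^'n) \<times> (complex^'m). exp (\<i> * lamC l (snd y)))"
  unfolding entire_fun_def
proof
  fix x :: "(complex^'n) \<times> (complex^'m)"
  have lin: "linear (\<lambda>y::(complex^'n) \<times> (complex^'m). \<i> * lamC l (snd y))"
    using lamC_linear[of l] by (intro linearI) (simp_all add: linear_add linear_scale)
  then have bl: "bounded_linear (\<lambda>y::(complex^'n) \<times> (complex^'m). \<i> * lamC l (snd y))"
    using linear_conv_bounded_linear by blast
  have d1: "((\<lambda>y. \<i> * lamC l (snd y)) has_derivative (\<lambda>y. \<i> * lamC l (snd y))) (at x)"
    by (rule bounded_linear_imp_has_derivative[OF bl])
  have d2: "(exp has_derivative (\<lambda>h. exp (\<i> * lamC l (snd x)) * h)) (at (\<i> * lamC l (snd x)))"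
    using DERIV_exp[of "\<i> * lamC l (snd x)"] by (simp add: has_field_derivative_def)
  have "((\<lambda>y. exp (\<i> * lamC l (snd y))) has_derivative (\<lambda>h. exp (\<i> * lamC l (snd x)) * (\<i> * lamC l (snd h)))) (at x)"
    using has_derivative_compose[OF d1 d2] by simp
  then show "\<exists>L. ((\<lambda>y. exp (\<i> * lamC l (snd y))) has_derivative L) (at x) \<and> (\<forall>c v. L (c *s fst v, c *s snd v) = c * L v)"
    by (intro exI[of _ "\<lambda>h. exp (\<i> * lamC l (snd x)) * (\<i> * lamC l (snd h))"]) (auto simp: lamC_smult)
qed

lemma entire_mult_exp: "entire_fun f \<Longrightarrow> entire_fun (mult_exp l f)"
  unfolding mult_exp_alt by (intro entire_mult entire_exp_lamC)

lemma entire_comp_affine: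
  assumes f: "entire_fun f" and M: "bounded_linear M"
    and Mc: "\<And>c v. M (c *s fst v, c *s snd v) = (c *s fst (M v), c *s snd (M v))"
  shows "entire_fun (\<lambda>y. f (a0 + M y))"
  unfolding entire_fun_def
proof
  fix x
  obtain L where L: "(f has_derivative L) (at (a0 + M x))" "\<And>c v. L (c *s fst v, c *s snd v) = c * L v"
    using f unfolding entire_fun_def by blast
  have dA: "((\<lambda>y. a0 + M y) has_derivative (\<lambda>h. 0 + M h)) (at x)"
    by (intro has_derivative_add has_derivative_const bounded_linear_imp_has_derivative[OF M])
  have "((\<lambda>y. f (a0 + M y)) has_derivative (\<lambda>h. L (M h))) (at x)"
    using has_derivative_compose[OF dA L(1)] by simp
  moreover have "L (M (c *s fst v, c *s snd v)) = c * L (M v)" for c v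
    using L(2)[of c "M v"] by (simp add: Mc)
  ultimately show "\<exists>L. ((\<lambda>y. f (a0 + M y)) has_derivative L) (at x) \<and> (\<forall>c v. L (c *s fst v, c *s snd v) = c * L v)"
    by blast
qed

lemma entire_scale: "entire_fun f \<Longrightarrow> entire_fun (\<lambda>y. c * f y)"
  using entire_mult[OF entire_const] by blast

lemma entire_continuous: "entire_fun f \<Longrightarrow> continuous_on UNIV f"
  unfolding entire_fun_def
  by (intro continuous_at_imp_continuous_on ballI) (meson has_derivative_continuous)

lemma Im_lamC: "Im (lamC l z) = l \<bullet> ImF z"
  by (simp add: lamC_def inner_vec_def Im_sum)

lemma exp_ereal_nonneg: "0 \<le> exp_ereal x"
  by (cases x) (auto simp: exp_ereal_def)

lemma exp_ereal_add: "exp_ereal (X + ereal a) = exp_ereal X * ereal (exp a)"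
  by (cases X) (auto simp: exp_ereal_def exp_add)

lemma HK_shift: "HK ((\<lambda>k. k + l) ` A) h = HK A h + ereal (- (l \<bullet> h))"
proof (cases "A = {}")
  case True
  then show ?thesis by (simp add: HK_def bot_ereal_def)
next
  case False
  have "HK ((\<lambda>k. k + l) ` A) h = (SUP k\<in>A. ereal ((- k) \<bullet> h) + ereal (- (l \<bullet> h)))"
    unfolding HK_def image_image by (intro SUP_cong) (auto simp: inner_diff_left)
  also have "\<dots> = (SUP k\<in>A. ereal ((- k) \<bullet> h)) + ereal (- (l \<bullet> h))"
    by (rule SUP_ereal_add_left) (use False in auto)
  also have "(SUP k\<in>A. ereal ((- k) \<bullet> h)) = HK A h"
    unfolding HK_def image_image ..
  finally show ?thesis .
qed

lemma msum_ball_shift: "msum_ball ((\<lambda>k. k + l) ` K) e = (\<lambda>k. k + l) ` msum_ball K e"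
proof (rule set_eqI)
  fix x
  show "x \<in> msum_ball ((\<lambda>k. k + l) ` K) e \<longleftrightarrow> x \<in> (\<lambda>k. k + l) ` msum_ball K e"
    unfolding msum_ball_def
  proof
    assume "x \<in> {k + b |k b. k \<in> (\<lambda>k. k + l) ` K \<and> b \<in> cball 0 e}"
    then obtain k b where kb: "k \<in> K" "b \<in> cball 0 e" and x: "x = (k + l) + b" by auto
    have "k + b \<in> {k + b |k b. k \<in> K \<and> b \<in> cball 0 e}" using kb by blast
    then show "x \<in> (\<lambda>k. k + l) ` {k + b |k b. k \<in> K \<and> b \<in> cball 0 e}"
      by (rule image_eqI[rotated]) (simp add: x algebra_simps)
  next
    assume "x \<in> (\<lambda>k. k + l) ` {k + b |k b. k \<in> K \<and> b \<in> cball 0 e}"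
    then obtain k b where kb: "k \<in> K" "b \<in> cball 0 e" and x: "x = (k + b) + l" by auto
    have "x = (k + l) + b \<and> (k + l) \<in> (\<lambda>k. k + l) ` K \<and> b \<in> cball 0 e" using kb x by (simp add: algebra_simps)
    then show "x \<in> {k + b |k b. k \<in> (\<lambda>k. k + l) ` K \<and> b \<in> cball 0 e}"
      by blast
  qed
qed

lemma ereal_bound_mono: "ereal a \<le> ereal b * Y \<Longrightarrow> b \<le> b' \<Longrightarrow> 0 \<le> Y \<Longrightarrow> ereal a \<le> ereal b' * Y"
  by (meson ereal_less_eq(3) ereal_mult_right_mono order_trans)

lemma ereal_bound_scale: "ereal a \<le> ereal b * Y \<Longrightarrow> 0 \<le> c \<Longrightarrow> ereal (c * a) \<le> ereal (c * b) * Y"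
proof -
  assume h: "ereal a \<le> ereal b * Y" and c: "0 \<le> c"
  have "ereal c * ereal a \<le> ereal c * (ereal b * Y)"
    using h c by (intro ereal_mult_left_mono) auto
  then show ?thesis by (metis mult.assoc times_ereal.simps(1))
qed

lemma growth_C1:
  assumes "ereal a \<le> ereal (C * exp (C * X)) * Y" "0 \<le> X" "0 \<le> Y"
  shows "ereal a \<le> ereal (max C 1 * exp (max C 1 * X)) * Y"
proof (rule ereal_bound_mono[OF assms(1) _ assms(3)])
  have "C * exp (C * X) \<le> max C 1 * exp (C * X)" by (intro mult_right_mono) auto
  also have "\<dots> \<le> max C 1 * exp (max C 1 * X)" using assms(2) by (intro mult_left_mono) (auto intro: mult_right_mono)
  finally show "C * exp (C * X) \<le> max C 1 * exp (max C 1 * X)" .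
qed

lemma Etilde_mult_exp:
  fixes Phi :: "complex^'n \<Rightarrow> complex^'n \<Rightarrow> complex^'m" and l :: "real^'m"
  assumes H: "hermitian_map Phi" and f: "f \<in> Etilde Phi K"
  shows "mult_exp l f \<in> Etilde Phi ((\<lambda>k. k + l) ` K)"
proof -
  obtain Cp where Cp: "Cp > 0" "\<And>a b. norm (Phi a b) \<le> Cp * norm a * norm b"
    using Phi_bound[OF H] by blast
  have ent: "entire_fun (mult_exp l f)" using f by (simp add: Etilde_def entire_mult_exp)
  have "\<exists>C. \<forall>\<zeta> z. ereal (norm (mult_exp l f (\<zeta>, z)))
        \<le> ereal (C * exp (C * ((norm \<zeta>)\<^sup>2 + norm (ReF z)))) * exp_ereal (HK (msum_ball ((\<lambda>k. k + l) ` K) e) (rho Phi \<zeta> z))"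
    if e: "e > 0" for e
  proof -
    obtain C where C: "\<And>\<zeta> z. ereal (norm (f (\<zeta>, z)))
        \<le> ereal (C * exp (C * ((norm \<zeta>)\<^sup>2 + norm (ReF z)))) * exp_ereal (HK (msum_ball K e) (rho Phi \<zeta> z))"
      using f e unfolding Etilde_def by blast
    define C1 where "C1 = max C 1"
    define a where "a = norm l * Cp"
    have a0: "0 \<le> a" using Cp by (simp add: a_def)
    have C11: "1 \<le> C1" by (simp add: C1_def)
    show ?thesis
    proof (intro exI allI)
      fix \<zeta> :: "complex^'n" and z :: "complex^'m"
      define X where "X = (norm \<zeta>)\<^sup>2 + norm (ReF z)"
      define \<rho> where "\<rho> = rho Phi \<zeta> z"
      define Y where "Y = exp_ereal (HK (msum_ball K e) \<rho>)"
      have X0: "0 \<le> X" by (simp add: X_def)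
      have Y0: "0 \<le> Y" by (simp add: Y_def exp_ereal_nonneg)
      have b1: "ereal (norm (f (\<zeta>, z))) \<le> ereal (C1 * exp (C1 * X)) * Y"
        unfolding C1_def by (rule growth_C1[OF C[of \<zeta> z, folded X_def \<rho>_def, folded Y_def] X0 Y0])
      have ImF: "ImF z = \<rho> + PhiF Phi \<zeta>" by (simp add: \<rho>_def rho_def)
      have E: "norm (mult_exp l f (\<zeta>, z)) = exp (- (l \<bullet> \<rho>)) * (exp (- (l \<bullet> PhiF Phi \<zeta>)) * norm (f (\<zeta>, z)))"
        by (simp add: mult_exp_alt norm_mult Im_lamC ImF inner_add_right exp_add[symmetric] mult.assoc)
      have b2: "ereal (norm (mult_exp l f (\<zeta>, z))) \<le> ereal (exp (- (l \<bullet> \<rho>)) * (exp (- (l \<bullet> PhiF Phi \<zeta>)) * (C1 * exp (C1 * X)))) * Y"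
        unfolding E by (intro ereal_bound_scale b1) auto
      have k: "exp (- (l \<bullet> PhiF Phi \<zeta>)) * (C1 * exp (C1 * X)) \<le> (C1 + a) * exp ((C1 + a) * X)"
      proof -
        have "- (l \<bullet> PhiF Phi \<zeta>) \<le> norm l * norm (PhiF Phi \<zeta>)"
          using inner_le_norms[of l "PhiF Phi \<zeta>"] by linarith
        also have "\<dots> \<le> norm l * (Cp * norm \<zeta> * norm \<zeta>)"
          using norm_PhiF_le[OF H, of \<zeta>] Cp(2)[of \<zeta> \<zeta>] by (intro mult_left_mono) auto
        also have "\<dots> \<le> a * X" unfolding a_def X_def using Cp(1)
          by (simp add: power2_eq_square mult_ac mult_left_mono)
        finally have "exp (- (l \<bullet> PhiF Phi \<zeta>)) \<le> exp (a * X)" by simp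
        then have "exp (- (l \<bullet> PhiF Phi \<zeta>)) * (C1 * exp (C1 * X)) \<le> exp (a * X) * (C1 * exp (C1 * X))"
          using C11 by (intro mult_right_mono) auto
        also have "\<dots> = C1 * exp ((C1 + a) * X)" by (simp add: algebra_simps exp_add)
        also have "\<dots> \<le> (C1 + a) * exp ((C1 + a) * X)" using a0 by (intro mult_right_mono) auto
        finally show ?thesis .
      qed
      have b3: "ereal (norm (mult_exp l f (\<zeta>, z))) \<le> ereal (exp (- (l \<bullet> \<rho>)) * ((C1 + a) * exp ((C1 + a) * X))) * Y"
        by (rule ereal_bound_mono[OF b2 _ Y0]) (use k in \<open>intro mult_left_mono, auto\<close>)
      have eq: "exp_ereal (HK (msum_ball ((\<lambda>k. k + l) ` K) e) \<rho>) = Y * ereal (exp (- (l \<bullet> \<rho>)))"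
        by (simp add: msum_ball_shift HK_shift exp_ereal_add Y_def)
      show "ereal (norm (mult_exp l f (\<zeta>, z)))
        \<le> ereal ((C1 + a) * exp ((C1 + a) * ((norm \<zeta>)\<^sup>2 + norm (ReF z)))) * exp_ereal (HK (msum_ball ((\<lambda>k. k + l) ` K) e) (rho Phi \<zeta> z))"
      proof -
        have r: "ereal (E * B) * Y = ereal B * (Y * ereal E)" for E B :: real
          by (metis mult.assoc mult.commute times_ereal.simps(1))
        have "ereal (norm (mult_exp l f (\<zeta>, z))) \<le> ereal ((C1 + a) * exp ((C1 + a) * X)) * exp_ereal (HK (msum_ball ((\<lambda>k. k + l) ` K) e) \<rho>)"
          using b3 unfolding eq r .
        then show ?thesis unfolding X_def \<rho>_def .
      qed
    qed
  qed
  then show ?thesis using ent unfolding Etilde_def by blast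
qed

definition shiftF :: "(complex^'n \<Rightarrow> complex^'n \<Rightarrow> complex^'m) \<Rightarrow> complex^'n \<Rightarrow> complex
    \<Rightarrow> ((complex^'n) \<times> (complex^'m) \<Rightarrow> complex) \<Rightarrow> ((complex^'n) \<times> (complex^'m) \<Rightarrow> complex)" where
  "shiftF Phi w c f = (\<lambda>y. c * f (fst y + w, snd y + \<i> *s (Phi w w + 2 *s Phi (fst y) w)))"

definition Lsh :: "(complex^'n \<Rightarrow> complex^'n \<Rightarrow> complex^'m) \<Rightarrow> complex^'n \<Rightarrow> complex^'n \<Rightarrow> real^'m" where
  "Lsh Phi w \<zeta> = - 2 *\<^sub>R ImF (Phi \<zeta> w)"

context
  fixes Phi :: "complex^'n \<Rightarrow> complex^'n \<Rightarrow> complex^'m"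
  assumes H: "hermitian_map Phi"
begin

lemma rho_shift: "rho Phi (\<zeta> + w) (z + \<i> *s (Phi w w + 2 *s Phi \<zeta> w)) = rho Phi \<zeta> z"
  by (simp add: rho_def PhiF_add[OF H] vec_eq_iff)

lemma ReF_shift: "ReF (z + \<i> *s (Phi w w + 2 *s Phi \<zeta> w)) = ReF z - 2 *\<^sub>R ImF (Phi \<zeta> w)"
  using Phi_diag_real[OF H, of w] by (simp add: vec_eq_iff)

lemma Phi_scaleR_L: "Phi (r *\<^sub>R a) b = r *\<^sub>R Phi a b"
  by (simp add: scaleR_vec_c' Phi_smultL[OF H])

lemma Lsh_cont: "continuous_on UNIV (Lsh Phi w)"
proof -
  have "linear (Lsh Phi w)"
    by (rule linearI) (simp_all add: Lsh_def Phi_addL[OF H] Phi_scaleR_L vec_eq_iff algebra_simps)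
  then have "bounded_linear (Lsh Phi w)" using linear_conv_bounded_linear by blast
  then show ?thesis by (rule linear_continuous_on)
qed

lemma entire_shiftF:
  assumes f: "entire_fun f" shows "entire_fun (shiftF Phi w c f)"
proof -
  define M where "M = (\<lambda>y::(complex^'n)\<times>(complex^'m). (fst y, snd y + \<i> *s (2 *s Phi (fst y) w)))"
  define a0 where "a0 = (w, \<i> *s Phi w w)"
  have lin: "linear M"
    by (rule linearI) (simp_all add: M_def Phi_addL[OF H] Phi_scaleR_L vec_eq_iff algebra_simps)
  then have bl: "bounded_linear M" using linear_conv_bounded_linear by blast
  have Mc: "M (c *s fst v, c *s snd v) = (c *s fst (M v), c *s snd (M v))" for c v
    by (simp add: M_def Phi_smultL[OF H] vec_eq_iff algebra_simps)
  have eq: "shiftF Phi w c f = (\<lambda>y. c * f (a0 + M y))"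
    by (auto simp: shiftF_def fun_eq_iff M_def a0_def vec_eq_iff algebra_simps intro!: arg_cong[where f=f])
  show ?thesis unfolding eq by (intro entire_scale entire_comp_affine[OF f bl Mc])
qed

lemma f0_shiftF: "f0 Phi (shiftF Phi w c f) = (\<lambda>y. c * f0 Phi f (fst y + w, snd y + Lsh Phi w (fst y)))"
proof -
  have "ofF (snd y) + \<i> *s ofF (PhiF Phi (fst y)) + \<i> *s (Phi w w + 2 *s Phi (fst y) w)
      = ofF (snd y + Lsh Phi w (fst y)) + \<i> *s ofF (PhiF Phi (fst y + w))" for y
    using Phi_diag_real[OF H, of w]
    by (simp add: vec_eq_iff complex_eq_iff PhiF_add[OF H] Lsh_def)
  then show ?thesis by (simp add: f0_alt shiftF_def fun_eq_iff add.assoc)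
qed

lemma Etilde_shiftF:
  assumes f: "f \<in> Etilde Phi K"
  shows "shiftF Phi w c f \<in> Etilde Phi K"
proof -
  obtain Cp where Cp: "Cp > 0" "\<And>a b. norm (Phi a b) \<le> Cp * norm a * norm b"
    using Phi_bound[OF H] by blast
  have ent: "entire_fun (shiftF Phi w c f)" using f by (simp add: Etilde_def entire_shiftF)
  have "\<exists>C. \<forall>\<zeta> z. ereal (norm (shiftF Phi w c f (\<zeta>, z)))
        \<le> ereal (C * exp (C * ((norm \<zeta>)\<^sup>2 + norm (ReF z)))) * exp_ereal (HK (msum_ball K e) (rho Phi \<zeta> z))"
    if e: "e > 0" for e
  proof -
    obtain C where C: "\<And>\<zeta> z. ereal (norm (f (\<zeta>, z)))
        \<le> ereal (C * exp (C * ((norm \<zeta>)\<^sup>2 + norm (ReF z)))) * exp_ereal (HK (msum_ball K e) (rho Phi \<zeta> z))"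
      using f e unfolding Etilde_def by blast
    define C1 where "C1 = max C 1"
    have C11: "1 \<le> C1" by (simp add: C1_def)
    define \<alpha> where "\<alpha> = 2 + Cp * norm w"
    define \<beta> where "\<beta> = 2 * (norm w)\<^sup>2 + Cp * norm w"
    define C' where "C' = norm c * C1 * exp (C1 * \<beta>) + C1 * \<alpha>"
    show ?thesis
    proof (intro exI allI)
      fix \<zeta> :: "complex^'n" and z :: "complex^'m"
      define X where "X = (norm \<zeta>)\<^sup>2 + norm (ReF z)"
      define z' where "z' = z + \<i> *s (Phi w w + 2 *s Phi \<zeta> w)"
      define X' where "X' = (norm (\<zeta> + w))\<^sup>2 + norm (ReF z')"
      define Y where "Y = exp_ereal (HK (msum_ball K e) (rho Phi \<zeta> z))"
      have X0: "0 \<le> X" by (simp add: X_def)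
      have X'0: "0 \<le> X'" by (simp add: X'_def)
      have Y0: "0 \<le> Y" by (simp add: Y_def exp_ereal_nonneg)
      have b1: "ereal (norm (f (\<zeta> + w, z'))) \<le> ereal (C1 * exp (C1 * X')) * Y"
      proof -
        have r: "rho Phi (\<zeta> + w) z' = rho Phi \<zeta> z" unfolding z'_def by (rule rho_shift)
        show ?thesis
          using growth_C1[OF C[of "\<zeta> + w" z', folded X'_def, unfolded r, folded Y_def] X'0 Y0]
          unfolding C1_def .
      qed
      have XX: "X' \<le> \<alpha> * X + \<beta>"
      proof -
        have n1: "(norm (\<zeta> + w))\<^sup>2 \<le> 2 * (norm \<zeta>)\<^sup>2 + 2 * (norm w)\<^sup>2"
        proof -
          have "(norm (\<zeta> + w))\<^sup>2 \<le> (norm \<zeta> + norm w)\<^sup>2"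
            by (intro power_mono norm_triangle_ineq) auto
          also have "\<dots> \<le> 2 * (norm \<zeta>)\<^sup>2 + 2 * (norm w)\<^sup>2"
            using power2_sum[of "norm \<zeta>" "norm w"] power2_diff[of "norm \<zeta>" "norm w"]
              zero_le_power2[of "norm \<zeta> - norm w"] by linarith
          finally show ?thesis .
        qed
        have n2: "norm (ReF z') \<le> norm (ReF z) + 2 * (Cp * norm \<zeta> * norm w)"
        proof -
          have "norm (ReF z') \<le> norm (ReF z) + norm (2 *\<^sub>R ImF (Phi \<zeta> w))"
            unfolding z'_def ReF_shift by (rule norm_triangle_ineq4)
          also have "norm (2 *\<^sub>R ImF (Phi \<zeta> w)) \<le> 2 * (Cp * norm \<zeta> * norm w)"
            using norm_ImF_le[of "Phi \<zeta> w"] Cp(2)[of \<zeta> w] by simp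
          finally show ?thesis by simp
        qed
        have n3: "2 * (Cp * norm \<zeta> * norm w) \<le> Cp * norm w * ((norm \<zeta>)\<^sup>2 + 1)"
        proof -
          have "2 * norm \<zeta> \<le> (norm \<zeta>)\<^sup>2 + 1"
            using power2_diff[of "norm \<zeta>" 1] zero_le_power2[of "norm \<zeta> - 1"] by simp
          then have "(Cp * norm w) * (2 * norm \<zeta>) \<le> (Cp * norm w) * ((norm \<zeta>)\<^sup>2 + 1)"
            using Cp(1) by (intro mult_left_mono) auto
          then show ?thesis by (simp add: algebra_simps)
        qed
        have "X' \<le> 2 * (norm \<zeta>)\<^sup>2 + 2 * (norm w)\<^sup>2 + norm (ReF z) + Cp * norm w * ((norm \<zeta>)\<^sup>2 + 1)"
          unfolding X'_def using n1 n2 n3 by linarith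
        also have "\<dots> = (2 + Cp * norm w) * (norm \<zeta>)\<^sup>2 + norm (ReF z) + \<beta>"
          by (simp add: \<beta>_def algebra_simps)
        also have "\<dots> \<le> \<alpha> * X + \<beta>"
        proof -
          have "norm (ReF z) \<le> \<alpha> * norm (ReF z)"
            using Cp(1) by (simp add: \<alpha>_def algebra_simps)
          then show ?thesis unfolding \<alpha>_def X_def by (simp add: algebra_simps)
        qed
        finally show ?thesis .
      qed
      have k: "norm c * (C1 * exp (C1 * X')) \<le> C' * exp (C' * X)"
      proof -
        have "C1 * X' \<le> C1 * \<beta> + C1 * \<alpha> * X" using XX C11 by (smt (verit) mult_left_mono distrib_left mult.assoc)
        then have "exp (C1 * X') \<le> exp (C1 * \<beta>) * exp (C1 * \<alpha> * X)" by (simp add: exp_add[symmetric])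
        then have "norm c * (C1 * exp (C1 * X')) \<le> norm c * C1 * exp (C1 * \<beta>) * exp (C1 * \<alpha> * X)"
          using C11 by (simp add: mult.assoc mult_left_mono)
        also have "\<dots> \<le> C' * exp (C1 * \<alpha> * X)"
          unfolding C'_def using C11 Cp(1) X0 by (intro mult_right_mono) (auto simp: \<alpha>_def)
        also have "\<dots> \<le> C' * exp (C' * X)"
        proof (intro mult_left_mono)
          have "C1 * \<alpha> \<le> C'" unfolding C'_def using C11 by simp
          then show "exp (C1 * \<alpha> * X) \<le> exp (C' * X)" using X0 by (simp add: mult_right_mono)
          show "0 \<le> C'" unfolding C'_def using C11 Cp(1) by (simp add: \<alpha>_def)
        qed
        finally show ?thesis .
      qed
      have "ereal (norm (shiftF Phi w c f (\<zeta>, z))) = ereal (norm c * norm (f (\<zeta> + w, z')))"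
        by (simp add: shiftF_def z'_def norm_mult)
      also have "\<dots> \<le> ereal (norm c * (C1 * exp (C1 * X'))) * Y"
        by (rule ereal_bound_scale[OF b1]) simp
      also have "\<dots> \<le> ereal (C' * exp (C' * X)) * Y"
        by (rule ereal_mult_right_mono) (use k Y0 in auto)
      finally show "ereal (norm (shiftF Phi w c f (\<zeta>, z)))
        \<le> ereal (C' * exp (C' * ((norm \<zeta>)\<^sup>2 + norm (ReF z)))) * exp_ereal (HK (msum_ball K e) (rho Phi \<zeta> z))"
        unfolding X_def Y_def .
    qed
  qed
  then show ?thesis using ent unfolding Etilde_def by blast
qed

end

lemma cont_ofF: "continuous_on UNIV (ofF :: real^'m \<Rightarrow> complex^'m)"
proof -
  have "linear (ofF :: real^'m \<Rightarrow> complex^'m)"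
    by (rule linearI) (simp_all add: vec_eq_iff ofF_def scaleR_vec_c')
  then show ?thesis using linear_conv_bounded_linear linear_continuous_on by blast
qed

lemma cont_ReF: "continuous_on UNIV (ReF :: complex^'m \<Rightarrow> real^'m)"
proof -
  have "linear (ReF :: complex^'m \<Rightarrow> real^'m)"
    by (rule linearI) (simp_all add: vec_eq_iff)
  then show ?thesis using linear_conv_bounded_linear linear_continuous_on by blast
qed

lemma cont_lamC: "continuous_on UNIV (lamC l :: complex^'m \<Rightarrow> complex)"
  using lamC_linear[of l] linear_conv_bounded_linear linear_continuous_on by blast

lemma cont_smult: "continuous_on UNIV (\<lambda>v::complex^'m. c *s v)"
proof -
  have "linear (\<lambda>v::complex^'m. c *s v)"
    by (rule linearI) (simp_all add: vec_eq_iff algebra_simps scaleR_vec_c')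
  then show ?thesis using linear_conv_bounded_linear linear_continuous_on by blast
qed

lemma ImF_ofF: "ImF (ofF x + \<i> *s ofF v) = v"
  by (simp add: vec_eq_iff)

lemma cont_PhiF:
  fixes Phi :: "complex^'n \<Rightarrow> complex^'n \<Rightarrow> complex^'m"
  assumes H: "hermitian_map Phi" shows "continuous_on UNIV (PhiF Phi)"
proof -
  have bb: "bounded_bilinear Phi" using Phi_bilinear[OF H] bilinear_conv_bounded_bilinear by blast
  have "continuous_on UNIV (\<lambda>a. Phi a a)"
    by (rule bounded_bilinear.continuous_on[OF bb]) (auto intro: continuous_on_id)
  then have "continuous_on UNIV (\<lambda>a. ReF (Phi a a))"
    using continuous_on_compose2[OF cont_ReF] by blast
  moreover have "PhiF Phi = (\<lambda>a. ReF (Phi a a))" by (simp add: fun_eq_iff vec_eq_iff)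
  ultimately show ?thesis by simp
qed

lemma f0_cont:
  fixes Phi :: "complex^'n \<Rightarrow> complex^'n \<Rightarrow> complex^'m"
  assumes H: "hermitian_map Phi" and f: "entire_fun f"
  shows "continuous_on UNIV (f0 Phi f)"
proof -
  have c1: "continuous_on UNIV (\<lambda>y::(complex^'n)\<times>(real^'m). (fst y, ofF (snd y) + \<i> *s ofF (PhiF Phi (fst y))))"
    by (intro continuous_intros continuous_on_compose2[OF cont_smult] continuous_on_compose2[OF cont_ofF] continuous_on_compose2[OF cont_PhiF[OF H]]) auto
  show ?thesis unfolding f0_alt
    using continuous_on_compose2[OF entire_continuous[OF f] c1] by simp
qed

lemma zero_islimpt_Reals: "(0::complex) islimpt \<real>"
  unfolding islimpt_approachable
proof (intro allI impI)
  fix e :: real assume e: "0 < e"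
  show "\<exists>x'::complex\<in>\<real>. x' \<noteq> 0 \<and> dist x' 0 < e"
  proof -
    have "complex_of_real (e/2) \<in> \<real>" by simp
    moreover have "complex_of_real (e/2) \<noteq> 0" using e by simp
    moreover have "dist (complex_of_real (e/2)) 0 < e" using e by (simp add: dist_norm)
    ultimately show ?thesis by blast
  qed
qed

lemma f0_nonzero:
  fixes Phi :: "complex^'n \<Rightarrow> complex^'n \<Rightarrow> complex^'m"
  assumes f: "entire_fun f" and nz: "f \<noteq> (\<lambda>_. 0)"
  shows "\<exists>y. f0 Phi f y \<noteq> 0"
proof (rule ccontr)
  assume "\<not> ?thesis"
  then have z0: "\<And>y. f0 Phi f y = 0" by blast
  have "f (\<zeta>, z) = 0" for \<zeta> z
  proof -
    define d where "d = ofF (ImF z - PhiF Phi \<zeta>)"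
    define v0 where "v0 = ofF (ReF z) + \<i> *s ofF (PhiF Phi \<zeta>)"
    define g where "g = (\<lambda>u::complex. f (\<zeta>, v0 + u *s d))"
    have hol: "g holomorphic_on UNIV"
      unfolding holomorphic_on_def
    proof
      fix u :: complex assume "u \<in> UNIV"
      obtain L where L: "(f has_derivative L) (at (\<zeta>, v0 + u *s d))" "\<And>c v. L (c *s fst v, c *s snd v) = c * L v"
        using f unfolding entire_fun_def by blast
      have blin: "bounded_linear (\<lambda>h::complex. h *s d)"
      proof -
        have "linear (\<lambda>h::complex. h *s d)"
          by (rule linearI) (simp_all add: vec_eq_iff algebra_simps scaleR_vec_c' scaleR_conv_of_real)
        then show ?thesis using linear_conv_bounded_linear by blast
      qed
      have dA: "((\<lambda>u. (\<zeta>, v0 + u *s d)) has_derivative (\<lambda>h. (0, 0 + h *s d))) (at u)"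
        by (intro has_derivative_Pair has_derivative_const has_derivative_add bounded_linear_imp_has_derivative[OF blin])
      have "(g has_derivative (\<lambda>h. L (0, 0 + h *s d))) (at u)"
        unfolding g_def by (rule has_derivative_compose[OF dA L(1)])
      moreover have "(\<lambda>h. L (0, 0 + h *s d)) = (\<lambda>h. L (0, d) * h)"
      proof
        fix h :: complex
        have "L (h *s fst (0::complex^'n, d), h *s snd (0::complex^'n, d)) = h * L (0, d)" by (rule L(2))
        then show "L (0, 0 + h *s d) = L (0, d) * h" by (simp add: mult.commute)
      qed
      ultimately have "(g has_field_derivative L (0, d)) (at u)"
        by (simp add: has_field_derivative_def)
      then show "g field_differentiable at u within UNIV"
        unfolding field_differentiable_def by auto
    qed
    have gR: "g x = 0" if "x \<in> \<real>" for x
    proof -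
      from that obtain r where r: "x = complex_of_real r" by (rule Reals_cases)
      have "v0 + x *s d = ofF (ReF z + r *\<^sub>R (ImF z - PhiF Phi \<zeta>)) + \<i> *s ofF (PhiF Phi \<zeta>)"
        by (simp add: r v0_def d_def vec_eq_iff complex_eq_iff)
      then have "g x = f0 Phi f (\<zeta>, ReF z + r *\<^sub>R (ImF z - PhiF Phi \<zeta>))"
        by (simp add: g_def f0_def)
      then show ?thesis using z0 by simp
    qed
    have "g \<i> = 0"
      by (rule analytic_continuation[OF hol open_UNIV connected_UNIV _ _ zero_islimpt_Reals gR]) auto
    moreover have "v0 + \<i> *s d = z"
      by (simp add: v0_def d_def vec_eq_iff complex_eq_iff)
    ultimately show ?thesis by (simp add: g_def)
  qed
  then have "f = (\<lambda>_. 0)" by auto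
  with nz show False by simp
qed

lemma zero_Bspace:
  fixes Phi :: "complex^'n \<Rightarrow> complex^'n \<Rightarrow> complex^'m"
  assumes p: "p > 0" shows "(\<lambda>_. 0) \<in> Bspace Phi p K"
proof -
  have E: "(\<lambda>_. 0) \<in> Etilde Phi K"
    unfolding Etilde_def
  proof (intro CollectI conjI entire_const allI impI)
    fix e :: real assume "e > 0"
    show "\<exists>C. \<forall>\<zeta> z. ereal (norm ((\<lambda>_. 0::complex) (\<zeta>, z)))
        \<le> ereal (C * exp (C * ((norm \<zeta>)\<^sup>2 + norm (ReF z)))) * exp_ereal (HK (msum_ball K e) (rho Phi \<zeta> z))"
      by (rule exI[of _ 1]) (auto simp: zero_ereal_def[symmetric] intro!: ereal_0_le_mult exp_ereal_nonneg)
  qed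
  have "memLp p (f0 Phi (\<lambda>_. 0))"
  proof (cases "p = \<infinity>")
    case True
    have "esssup lborel (\<lambda>x::(complex^'n)\<times>(real^'m). ereal 0) = 0" using esssup_const[of "lborel :: ((complex^'n)\<times>(real^'m)) measure" "ereal 0"] by (simp add: zero_ereal_def)
    then show ?thesis using True by (simp add: memLp_def f0_def split_beta)
  next
    case False
    then show ?thesis using enn2real_p_pos[OF p False] by (simp add: memLp_def f0_def split_beta)
  qed
  with E show ?thesis by (simp add: Bspace_def)
qed

lemma f0_mult_exp: "f0 Phi (mult_exp l h) = (\<lambda>y. exp (\<i> * lamC l (ofF (snd y) + \<i> *s ofF (PhiF Phi (fst y)))) * f0 Phi h y)"
  by (simp add: f0_alt mult_exp_alt)

lemma norm_f0_mult_exp: "norm (f0 Phi (mult_exp l h) y) = exp (- (l \<bullet> PhiF Phi (fst y))) * norm (f0 Phi h y)"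
  unfolding f0_mult_exp norm_mult by (simp add: Im_lamC ImF_ofF)

lemma cont_exp_factor:
  fixes Phi :: "complex^'n \<Rightarrow> complex^'n \<Rightarrow> complex^'m" and l :: "real^'m"
  assumes H: "hermitian_map Phi"
  shows "continuous_on UNIV (\<lambda>y::(complex^'n)\<times>(real^'m). exp (\<i> * lamC l (ofF (snd y) + \<i> *s ofF (PhiF Phi (fst y)))))"
  by (intro continuous_intros continuous_on_compose2[OF cont_lamC] continuous_on_compose2[OF cont_smult]
      continuous_on_compose2[OF cont_ofF] continuous_on_compose2[OF cont_PhiF[OF H]]) auto

lemma mult_exp_Lp:
  fixes Phi :: "complex^'n \<Rightarrow> complex^'n \<Rightarrow> complex^'m" and l :: "real^'m"
  assumes H: "hermitian_map Phi" and p: "p > 0" and pol: "l \<in> polar_PhiE Phi"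
    and hL: "memLp p (f0 Phi h)"
  shows "memLp p (f0 Phi (mult_exp l h)) \<and> Bnorm Phi p (mult_exp l h) \<le> Bnorm Phi p h"
proof -
  have hm: "f0 Phi h \<in> borel_measurable borel" using hL by (simp add: memLp_def)
  have Em: "(\<lambda>y::(complex^'n)\<times>(real^'m). exp (\<i> * lamC l (ofF (snd y) + \<i> *s ofF (PhiF Phi (fst y))))) \<in> borel_measurable borel"
    by (rule borel_measurable_continuous_onI[OF cont_exp_factor[OF H]])
  have m: "f0 Phi (mult_exp l h) \<in> borel_measurable lborel"
    unfolding f0_mult_exp using borel_measurable_times[OF Em hm] by simp
  have le: "norm (f0 Phi (mult_exp l h) y) \<le> norm (f0 Phi h y)" for y
  proof -
    have "0 \<le> l \<bullet> PhiF Phi (fst y)" using pol by (simp add: polar_PhiE_def)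
    then have "exp (- (l \<bullet> PhiF Phi (fst y))) \<le> 1" by simp
    then show ?thesis unfolding norm_f0_mult_exp by (simp add: mult_left_le_one_le)
  qed
  show ?thesis using Lp_norm_mono[OF p hL m le] by (simp add: Bnorm_def)
qed

lemma exponent_bound:
  fixes Phi :: "complex^'n \<Rightarrow> complex^'n \<Rightarrow> complex^'m" and lam :: "real^'m"
  assumes H: "hermitian_map Phi" and Cp: "\<And>a b. norm (Phi a b) \<le> Cp * norm a * norm b" and Cp0: "Cp > 0"
    and nz: "norm z \<le> R" and t: "0 \<le> t"
  shows "- (lam \<bullet> PhiF Phi z0) * t\<^sup>2 - (2 * norm lam * Cp * R * norm z0) * t - norm lam * Cp * R\<^sup>2
    \<le> - (lam \<bullet> PhiF Phi (z - complex_of_real t *s z0))"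
proof -
  define w where "w = complex_of_real t *s z0"
  have R0: "0 \<le> R" using nz norm_ge_zero order_trans by blast
  have "PhiF Phi (z - w) = PhiF Phi z + PhiF Phi (- w) + 2 *\<^sub>R ReF (Phi z (- w))"
    using PhiF_add[OF H, of z "- w"] by simp
  also have "PhiF Phi (- w) = t\<^sup>2 *\<^sub>R PhiF Phi z0"
    unfolding w_def PhiF_minus[OF H] PhiF_scale[OF H] ..
  also have "ReF (Phi z (- w)) = - (t *\<^sub>R ReF (Phi z z0))"
    unfolding w_def Phi_minusR[OF H] using ReF_Phi_scaleR[OF H, of z t z0] by (simp add: vec_eq_iff)
  finally have E: "PhiF Phi (z - w) = PhiF Phi z + t\<^sup>2 *\<^sub>R PhiF Phi z0 + 2 *\<^sub>R (- (t *\<^sub>R ReF (Phi z z0)))" .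
  have "lam \<bullet> PhiF Phi (z - w) = lam \<bullet> PhiF Phi z + t\<^sup>2 * (lam \<bullet> PhiF Phi z0) - 2 * t * (lam \<bullet> ReF (Phi z z0))"
    unfolding E by (simp add: inner_add_right inner_diff_right inner_minus_right)
  then have eq: "- (lam \<bullet> PhiF Phi (z - w)) = - (lam \<bullet> PhiF Phi z) - t\<^sup>2 * (lam \<bullet> PhiF Phi z0) + 2 * t * (lam \<bullet> ReF (Phi z z0))"
    by simp
  have b1: "lam \<bullet> PhiF Phi z \<le> norm lam * Cp * R\<^sup>2"
  proof -
    have "lam \<bullet> PhiF Phi z \<le> norm lam * norm (PhiF Phi z)" using inner_le_norms[of lam "PhiF Phi z"] by linarith
    also have "\<dots> \<le> norm lam * (Cp * norm z * norm z)"
      using norm_PhiF_le[OF H, of z] Cp[of z z] by (intro mult_left_mono) auto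
    also have "\<dots> \<le> norm lam * (Cp * R * R)"
    proof -
      have "norm z * norm z \<le> R * R" using nz R0 by (intro mult_mono) auto
      then have "Cp * norm z * norm z \<le> Cp * R * R" using Cp0 by (simp add: mult.assoc mult_left_mono)
      then show ?thesis by (simp add: mult_left_mono)
    qed
    finally show ?thesis by (simp add: power2_eq_square mult_ac)
  qed
  have b2: "- (lam \<bullet> ReF (Phi z z0)) \<le> norm lam * Cp * R * norm z0"
  proof -
    have "- (lam \<bullet> ReF (Phi z z0)) \<le> norm lam * norm (ReF (Phi z z0))" using inner_le_norms[of lam "ReF (Phi z z0)"] by linarith
    also have "\<dots> \<le> norm lam * (Cp * norm z * norm z0)"
      using norm_ReF_le[of "Phi z z0"] Cp[of z z0] by (intro mult_left_mono) auto
    also have "\<dots> \<le> norm lam * (Cp * R * norm z0)"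
      using nz Cp0 by (intro mult_left_mono mult_right_mono) auto
    finally show ?thesis by (simp add: mult_ac)
  qed
  have "2 * t * (- (lam \<bullet> ReF (Phi z z0))) \<le> 2 * t * (norm lam * Cp * R * norm z0)"
    using b2 t by (intro mult_left_mono) auto
  then have h2: "- (2 * t * (norm lam * Cp * R * norm z0)) \<le> 2 * t * (lam \<bullet> ReF (Phi z z0))" by linarith
  have X: "- (norm lam * Cp * R\<^sup>2) - t\<^sup>2 * (lam \<bullet> PhiF Phi z0) - 2 * t * (norm lam * Cp * R * norm z0) \<le> - (lam \<bullet> PhiF Phi (z - w))"
    using eq b1 h2 by linarith
  have e1: "- (lam \<bullet> PhiF Phi z0) * t\<^sup>2 = - (t\<^sup>2 * (lam \<bullet> PhiF Phi z0))" by (simp add: mult.commute)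
  have e2: "(2 * norm lam * Cp * R * norm z0) * t = 2 * t * (norm lam * Cp * R * norm z0)" by (simp only: mult_ac)
  show ?thesis unfolding w_def[symmetric] e1 e2 using X by linarith
qed

lemma exists_large_t:
  fixes c0 B D T :: real assumes c0: "c0 > 0"
  shows "\<exists>t. 1 \<le> t \<and> T \<le> c0 * t\<^sup>2 - B * t - D"
proof -
  define t where "t = max 1 ((\<bar>B\<bar> + \<bar>D\<bar> + \<bar>T\<bar>) / c0)"
  have t1: "1 \<le> t" by (simp add: t_def)
  have "\<bar>B\<bar> + \<bar>D\<bar> + \<bar>T\<bar> \<le> c0 * t"
    using c0 by (simp add: t_def field_simps max_def)
  then have "(\<bar>B\<bar> + \<bar>D\<bar> + \<bar>T\<bar>) * t \<le> c0 * t * t" using t1 by (intro mult_right_mono) auto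
  moreover have "B * t + D + T \<le> (\<bar>B\<bar> + \<bar>D\<bar> + \<bar>T\<bar>) * t"
  proof -
    have "B * t \<le> \<bar>B\<bar> * t" using t1 by (intro mult_right_mono) auto
    moreover have "\<bar>D\<bar> + \<bar>T\<bar> \<le> (\<bar>D\<bar> + \<bar>T\<bar>) * t" using t1 by (simp add: mult_le_cancel_left1)
    ultimately show ?thesis by (simp add: algebra_simps)
  qed
  ultimately show ?thesis using t1 by (intro exI[of _ t]) (simp add: power2_eq_square algebra_simps)
qed

theorem proposition3p5:
  fixes Phi :: "complex^'n \<Rightarrow> complex^'n \<Rightarrow> complex^'m"
    and p :: ennreal and lam :: "real^'m" and K :: "(real^'m) set"
  assumes "hermitian_map Phi"
    and "p > 0"
    and "compact K" and "convex K"
    and "Bspace Phi p K \<noteq> {\<lambda>_. 0}"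
  shows "cont_map_B Phi p K ((\<lambda>k. k + lam) ` K) (mult_exp lam) \<longleftrightarrow> lam \<in> polar_PhiE Phi"
proof
  note H = assms(1) and p = assms(2)
  assume cm: "cont_map_B Phi p K ((\<lambda>k. k + lam) ` K) (mult_exp lam)"
  have cm1: "\<And>f. f \<in> Bspace Phi p K \<Longrightarrow> mult_exp lam f \<in> Bspace Phi p ((\<lambda>k. k + lam) ` K)"
    using cm unfolding cont_map_B_def by blast
  have cm2: "\<And>fs f. (\<forall>k. fs k \<in> Bspace Phi p K) \<Longrightarrow> f \<in> Bspace Phi p K \<Longrightarrow>
      (\<lambda>k. Bnorm Phi p (fs k - f)) \<longlonglongrightarrow> 0 \<Longrightarrow> (\<lambda>k. Bnorm Phi p (mult_exp lam (fs k) - mult_exp lam f)) \<longlonglongrightarrow> 0"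
    using cm unfolding cont_map_B_def by blast
  show "lam \<in> polar_PhiE Phi"
  proof (rule ccontr)
    assume "lam \<notin> polar_PhiE Phi"
    then obtain z0 where z0: "lam \<bullet> PhiF Phi z0 < 0" unfolding polar_PhiE_def by (auto simp: not_le)
    obtain f where fB: "f \<in> Bspace Phi p K" and fnz: "f \<noteq> (\<lambda>_. 0)"
      using assms(5) zero_Bspace[OF p, of Phi K] by blast
    have fE: "entire_fun f" and fL: "memLp p (f0 Phi f)" using fB by (auto simp: Bspace_def Etilde_def)
    have fm: "f0 Phi f \<in> borel_measurable borel" using fL by (simp add: memLp_def)
    obtain y1 where y1: "f0 Phi f y1 \<noteq> 0" using f0_nonzero[OF fE fnz] by blast
    define \<delta> where "\<delta> = norm (f0 Phi f y1) / 2"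
    have \<delta>: "\<delta> > 0" using y1 by (simp add: \<delta>_def)
    have "isCont (f0 Phi f) y1" using f0_cont[OF H fE] by (simp add: continuous_on_eq_continuous_at del: split_paired_All)
    then obtain r0 where r0: "r0 > 0" "\<And>y. dist y y1 < r0 \<Longrightarrow> dist (f0 Phi f y) (f0 Phi f y1) < \<delta>"
      using \<delta> unfolding continuous_at_eps_delta by blast
    define r where "r = min r0 1"
    have r: "r > 0" using r0 by (simp add: r_def)
    have lbf: "\<delta> \<le> norm (f0 Phi f y)" if "y \<in> ball y1 r" for y
    proof -
      have "dist (f0 Phi f y) (f0 Phi f y1) < \<delta>" using that r0(2)[of y] by (simp add: r_def dist_commute)
      then have "norm (f0 Phi f y1) - norm (f0 Phi f y) < \<delta>"
        by (metis dist_norm norm_minus_commute norm_triangle_ineq2 le_less_trans)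
      then show ?thesis by (simp add: \<delta>_def)
    qed
    define R where "R = norm (fst y1) + 1"
    have nR: "norm (fst y) \<le> R" if "y \<in> ball y1 r" for y
    proof -
      have "norm (fst y - fst y1) \<le> norm (y - y1)"
      proof -
        have "y - y1 = (fst y - fst y1, snd y - snd y1)" by (simp add: prod_eq_iff)
        then show ?thesis using norm_fst_le[of "fst y - fst y1" "snd y - snd y1"] by simp
      qed
      also have "\<dots> < 1" using that by (simp add: r_def dist_norm norm_minus_commute)
      finally have "norm (fst y - fst y1) < 1" .
      then show ?thesis unfolding R_def using norm_triangle_ineq2[of "fst y" "fst y1"] by linarith
    qed
    define \<kappa> where "\<kappa> = (if p = \<infinity> then 1 else measure lborel (ball y1 r) powr (1 / enn2real p))"
    have \<kappa>: "\<kappa> > 0" unfolding \<kappa>_def using kappa_pos[OF r, of p y1] by simp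
    obtain Cp where Cp: "Cp > 0" "\<And>a b. norm (Phi a b) \<le> Cp * norm a * norm b"
      using Phi_bound[OF H] by blast
    define c0 where "c0 = - (lam \<bullet> PhiF Phi z0)"
    have c0: "c0 > 0" using z0 by (simp add: c0_def)
    define B where "B = 2 * norm lam * Cp * R * norm z0"
    define D where "D = norm lam * Cp * R\<^sup>2"
    define M where "M = Bnorm Phi p f"
    have claim: "\<exists>h. h \<in> Bspace Phi p K \<and> Bnorm Phi p h \<le> M / real (Suc k) \<and> 1 \<le> Bnorm Phi p (mult_exp lam h)" for k
    proof -
      define c where "c = 1 / real (Suc k)"
      have c: "0 < c" "c \<le> 1" by (auto simp: c_def)
      define T where "T = ln (real (Suc k) / (\<delta> * \<kappa>))"
      obtain t where t: "1 \<le> t" "T \<le> c0 * t\<^sup>2 - B * t - D"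
        using exists_large_t[OF c0] by blast
      define w where "w = complex_of_real t *s z0"
      define h where "h = shiftF Phi w (complex_of_real c) f"
      define F where "F = (\<lambda>y. complex_of_real c * f0 Phi f y)"
      have Fm: "F \<in> borel_measurable borel" unfolding F_def using fm by measurable
      have FL: "memLp p F \<and> Lp_norm p F \<le> Lp_norm p (f0 Phi f)"
        by (rule Lp_norm_mono[OF p fL]) (use Fm c in \<open>auto simp: F_def norm_mult mult_left_le_one_le\<close>)
      have f0h: "f0 Phi h = (\<lambda>y. F (fst y + w, snd y + Lsh Phi w (fst y)))"
        unfolding h_def F_def f0_shiftF[OF H] ..
      have hL: "memLp p (f0 Phi h)"
        unfolding f0h shear_Lp(1)[OF Fm Lsh_cont[OF H]] using FL by blast
      have hE: "h \<in> Etilde Phi K" unfolding h_def using Etilde_shiftF[OF H] fB by (simp add: Bspace_def)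
      have hB: "h \<in> Bspace Phi p K" using hE hL by (simp add: Bspace_def)
      have Bh: "Bnorm Phi p h = M / real (Suc k)"
      proof -
        have "Bnorm Phi p h = Lp_norm p F" unfolding Bnorm_def f0h by (rule shear_Lp(2)[OF Fm Lsh_cont[OF H]])
        also have "\<dots> = c * M" unfolding F_def M_def Bnorm_def by (rule Lp_norm_scale[OF p c(1)]) (use fm in simp)
        finally show ?thesis by (simp add: c_def)
      qed
      define G where "G = (\<lambda>y. complex_of_real (c * exp (- (lam \<bullet> PhiF Phi (fst y - w)))) * f0 Phi f y)"
      have Gc: "continuous_on UNIV (\<lambda>y::(complex^'n)\<times>(real^'m). complex_of_real (c * exp (- (lam \<bullet> PhiF Phi (fst y - w)))))"
        by (intro continuous_intros continuous_on_compose2[OF cont_PhiF[OF H]]) auto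
      have Gm: "G \<in> borel_measurable borel"
        unfolding G_def using borel_measurable_times[OF borel_measurable_continuous_onI[OF Gc] fm] by simp
      have nT: "norm (f0 Phi (mult_exp lam h) y) = norm (G (fst y + w, snd y + Lsh Phi w (fst y)))" for y
        using c(1) by (simp add: norm_f0_mult_exp f0h F_def G_def norm_mult)
      have ThL: "memLp p (f0 Phi (mult_exp lam h))" using cm1[OF hB] by (simp add: Bspace_def)
      have GSm: "(\<lambda>y. G (fst y + w, snd y + Lsh Phi w (fst y))) \<in> borel_measurable lborel"
      proof -
        have "(\<lambda>y::(complex^'n)\<times>(real^'m). (fst y + w, snd y + Lsh Phi w (fst y))) \<in> borel_measurable borel"
          by (intro borel_measurable_continuous_onI continuous_intros continuous_on_compose2[OF Lsh_cont[OF H]]) auto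
        then show ?thesis using measurable_compose[OF _ Gm] by simp
      qed
      have GL: "memLp p G"
        using memLp_cong_norm[OF ThL GSm nT[symmetric]] shear_Lp(1)[OF Gm Lsh_cont[OF H]] by blast
      have BT: "Bnorm Phi p (mult_exp lam h) = Lp_norm p G"
      proof -
        have e: "Lp_norm p (f0 Phi (mult_exp lam h)) = Lp_norm p (\<lambda>y. G (fst y + w, snd y + Lsh Phi w (fst y)))"
          by (rule Lp_norm_cong_norm) (rule nT)
        then show ?thesis unfolding Bnorm_def by (simp add: shear_Lp(2)[OF Gm Lsh_cont[OF H]])
      qed
      have lbG: "c * exp T * \<delta> \<le> norm (G y)" if "y \<in> ball y1 r" for y
      proof -
        have "T \<le> - (lam \<bullet> PhiF Phi (fst y - w))"
          using t(2) exponent_bound[OF H Cp(2) Cp(1) nR[OF that], of t lam z0] t(1)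
          unfolding w_def B_def D_def c0_def by (simp add: mult.commute)
        then have "exp T \<le> exp (- (lam \<bullet> PhiF Phi (fst y - w)))" by simp
        then have "c * exp T * \<delta> \<le> c * exp (- (lam \<bullet> PhiF Phi (fst y - w))) * norm (f0 Phi f y)"
          using c(1) \<delta> lbf[OF that] by (intro mult_mono) auto
        then show ?thesis using c(1) by (simp add: G_def norm_mult)
      qed
      have "c * exp T * \<delta> * \<kappa> \<le> Lp_norm p G"
        using Lp_lower_ball[OF p GL r _ lbG, of y1] c(1) \<delta> unfolding \<kappa>_def by auto
      moreover have "c * exp T * \<delta> * \<kappa> = 1"
        using \<delta> \<kappa> by (simp add: T_def c_def)
      ultimately have "1 \<le> Bnorm Phi p (mult_exp lam h)" using BT by simp
      then show ?thesis using hB Bh by auto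
    qed
    then obtain hs where hs: "\<And>k. hs k \<in> Bspace Phi p K" "\<And>k. Bnorm Phi p (hs k) \<le> M / real (Suc k)"
      "\<And>k. 1 \<le> Bnorm Phi p (mult_exp lam (hs k))"
      by metis
    have z: "(\<lambda>_. 0) \<in> Bspace Phi p K" by (rule zero_Bspace[OF p])
    have e1: "hs k - (\<lambda>_. 0) = hs k" for k by (simp add: fun_eq_iff)
    have e2: "mult_exp lam (hs k) - mult_exp lam (\<lambda>_. 0) = mult_exp lam (hs k)" for k
      by (simp add: fun_eq_iff mult_exp_alt)
    have lim: "(\<lambda>k. M / real (Suc k)) \<longlonglongrightarrow> 0"
      using LIMSEQ_Suc[OF lim_const_over_n[of M]] by simp
    have nn: "\<forall>k. 0 \<le> Bnorm Phi p (hs k)" by (simp add: Bnorm_def Lp_norm_nonneg)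
    have "(\<lambda>k. Bnorm Phi p (hs k - (\<lambda>_. 0))) \<longlonglongrightarrow> 0"
      unfolding e1 by (intro tendsto_sandwich[OF _ _ tendsto_const lim] always_eventually allI) (use nn hs(2) in auto)
    then have "(\<lambda>k. Bnorm Phi p (mult_exp lam (hs k) - mult_exp lam (\<lambda>_. 0))) \<longlonglongrightarrow> 0"
      by (intro cm2[OF _ z]) (use hs(1) in auto)
    then have "(\<lambda>k. Bnorm Phi p (mult_exp lam (hs k))) \<longlonglongrightarrow> 0"
      unfolding e2 .
    then have "1 \<le> (0::real)" by (rule LIMSEQ_le_const) (use hs(3) in auto)
    then show False by simp
  qed
next
  note H = assms(1) and p = assms(2)
  assume pol: "lam \<in> polar_PhiE Phi"
  show "cont_map_B Phi p K ((\<lambda>k. k + lam) ` K) (mult_exp lam)"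
    unfolding cont_map_B_def
  proof (intro conjI ballI allI impI)
    fix f assume "f \<in> Bspace Phi p K"
    then show "mult_exp lam f \<in> Bspace Phi p ((\<lambda>k. k + lam) ` K)"
      using Etilde_mult_exp[OF H] mult_exp_Lp[OF H p pol] by (auto simp: Bspace_def)
  next
    fix fs f
    assume A: "\<forall>k. fs k \<in> Bspace Phi p K" "f \<in> Bspace Phi p K" "(\<lambda>k. Bnorm Phi p (fs k - f)) \<longlonglongrightarrow> 0"
    have L: "memLp p (f0 Phi (fs k - f))" for k
    proof -
      have "f0 Phi (fs k - f) = (\<lambda>y. f0 Phi (fs k) y - f0 Phi f y)" by (simp add: f0_alt fun_eq_iff)
      moreover have "memLp p (f0 Phi (fs k))" "memLp p (f0 Phi f)" using A(1,2) by (auto simp: Bspace_def)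
      ultimately show ?thesis using memLp_diff[OF p, of "f0 Phi (fs k)" "f0 Phi f"] by simp
    qed
    have le: "Bnorm Phi p (mult_exp lam (fs k) - mult_exp lam f) \<le> Bnorm Phi p (fs k - f)" for k
    proof -
      have "mult_exp lam (fs k) - mult_exp lam f = mult_exp lam (fs k - f)"
        by (simp add: mult_exp_alt fun_eq_iff algebra_simps)
      then show ?thesis using mult_exp_Lp[OF H p pol L[of k]] by simp
    qed
    show "(\<lambda>k. Bnorm Phi p (mult_exp lam (fs k) - mult_exp lam f)) \<longlonglongrightarrow> 0"
      by (rule tendsto_sandwich[OF _ _ tendsto_const A(3)]) (auto simp: le[unfolded Bnorm_def] Bnorm_def Lp_norm_nonneg)
  qed
qed

end
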